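(* Let $\mathcal G$ be a core network with input nodes $\iota_1,\dots,\iota_n$ and output node $o$. The absolutely super-simple nodes of $\mathcal G$ can be uniquely ordered as $\rho_1>\rho_2>\cdots>\rho_p>o$, where $a>b$ means that, for every $m$, $b$ is downstream from $a$ along every $\iota_mo$-simple path (i.e. $b$ appears after $a$ on every such path).
   Context: Node $b$ is downstream from $a$ if there is a directed path from $a$ to $b$. A core network: every node is upstream from $o$ and downstream from at least one input node. A simple path visits each node at most once; an $\iota_mo$-simple path is a simple path from $\iota_m$ to $o$. A node is absolutely super-simple if, for every $m=1,\dots,n$, it lies on every $\iota_mo$-simple path. *)

theory Defs
  imports Main
begin

definition is_path :: "('a \<times> 'a) set \<Rightarrow> 'a list \<Rightarrow> bool" where
  "is_path E P \<longleftrightarrow> P \<noteq> [] \<and> (\<forall>i. Suc i < length P \<longrightarrow> (P ! i, P ! Suc i) \<in> E)"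

definition downstream :: "('a \<times> 'a) set \<Rightarrow> 'a \<Rightarrow> 'a \<Rightarrow> bool" where
  "downstream E a b \<longleftrightarrow> (a, b) \<in> E\<^sup>*"

definition simple_path_from_to :: "('a \<times> 'a) set \<Rightarrow> 'a \<Rightarrow> 'a \<Rightarrow> 'a list \<Rightarrow> bool" where
  "simple_path_from_to E a b P \<longleftrightarrow>
     is_path E P \<and> distinct P \<and> hd P = a \<and> last P = b"

definition network :: "'a set \<Rightarrow> ('a \<times> 'a) set \<Rightarrow> nat \<Rightarrow> (nat \<Rightarrow> 'a) \<Rightarrow> 'a \<Rightarrow> bool" where
  "network V E n \<iota> out \<longleftrightarrow> finite V \<and> E \<subseteq> V \<times> V \<and> out \<in> V \<and> (\<forall>m\<in>{1..n}. \<iota> m \<in> V)"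

definition core_network :: "'a set \<Rightarrow> ('a \<times> 'a) set \<Rightarrow> nat \<Rightarrow> (nat \<Rightarrow> 'a) \<Rightarrow> 'a \<Rightarrow> bool" where
  "core_network V E n \<iota> out \<longleftrightarrow> network V E n \<iota> out \<and>
     (\<forall>v\<in>V. downstream E v out \<and> (\<exists>m\<in>{1..n}. downstream E (\<iota> m) v))"

definition abs_super_simple :: "('a \<times> 'a) set \<Rightarrow> nat \<Rightarrow> (nat \<Rightarrow> 'a) \<Rightarrow> 'a \<Rightarrow> 'a \<Rightarrow> bool" where
  "abs_super_simple E n \<iota> out v \<longleftrightarrow>
     (\<forall>m\<in>{1..n}. \<forall>P. simple_path_from_to E (\<iota> m) out P \<longrightarrow> v \<in> set P)"

definition ss_greater :: "('a \<times> 'a) set \<Rightarrow> nat \<Rightarrow> (nat \<Rightarrow> 'a) \<Rightarrow> 'a \<Rightarrow> 'a \<Rightarrow> 'a \<Rightarrow> bool" where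
  "ss_greater E n \<iota> out a b \<longleftrightarrow>
     (\<forall>m\<in>{1..n}. \<forall>P. simple_path_from_to E (\<iota> m) out P \<longrightarrow>
        (\<exists>i j. i < j \<and> j < length P \<and> P ! i = a \<and> P ! j = b))"

end

theory Submission
  imports Defs
begin

lemma is_path_succ: "is_path E P \<longleftrightarrow> P \<noteq> [] \<and> successively (\<lambda>x y. (x, y) \<in> E) P"
  unfolding is_path_def successively_conv_nth by simp

lemma join_path:
  assumes "is_path E xs" "is_path E ys" "last xs = hd ys"
  shows "is_path E (xs @ tl ys) \<and> hd (xs @ tl ys) = hd xs \<and> last (xs @ tl ys) = last ys
         \<and> set (xs @ tl ys) \<subseteq> set xs \<union> set ys"
proof -
  obtain y ys' where ys: "ys = y # ys'" using assms(2) unfolding is_path_def by (cases ys) auto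
  have sx: "successively (\<lambda>x y. (x, y) \<in> E) xs" "xs \<noteq> []" using assms(1) is_path_succ by auto
  have sy: "successively (\<lambda>x y. (x, y) \<in> E) (y # ys')" using assms(2) ys is_path_succ by auto
  have "successively (\<lambda>x y. (x, y) \<in> E) (xs @ ys')"
    using sx sy assms(3) ys by (auto simp: successively_append_iff successively_Cons)
  moreover have "last (xs @ ys') = last ys" using ys assms(3) sx(2) by (cases ys') auto
  ultimately show ?thesis using sx(2) ys by (auto simp: is_path_succ)
qed

lemma walk_exists:
  assumes "(a, b) \<in> E\<^sup>*"
  shows "\<exists>P. is_path E P \<and> hd P = a \<and> last P = b"
  using assms
proof (induction rule: rtrancl_induct)
  case base
  then show ?case by (rule exI[of _ "[a]"]) (simp add: is_path_def)
next
  case (step y z)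
  then obtain P where P: "is_path E P" "hd P = a" "last P = y" by blast
  have yz: "is_path E [y, z]" using step by (auto simp: is_path_def less_Suc_eq)
  show ?case using join_path[OF P(1) yz] P by auto
qed

lemma shorten:
  "is_path E P \<Longrightarrow> hd P = a \<Longrightarrow> last P = b \<Longrightarrow>
   \<exists>Q. simple_path_from_to E a b Q \<and> set Q \<subseteq> set P"
proof (induction "length P" arbitrary: P rule: less_induct)
  case less
  show ?case
  proof (cases "distinct P")
    case True
    then show ?thesis using less.prems unfolding simple_path_from_to_def by blast
  next
    case False
    then obtain xs ys zs y where P: "P = xs @ [y] @ ys @ [y] @ zs"
      using not_distinct_decomp by blast
    let ?Q = "xs @ [y] @ zs"
    have s: "successively (\<lambda>x y. (x, y) \<in> E) P" using less.prems is_path_succ by blast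
    have "successively (\<lambda>x y. (x, y) \<in> E) ?Q"
      using s unfolding P by (auto simp: successively_append_iff successively_Cons)
    then have "is_path E ?Q" by (simp add: is_path_succ)
    moreover have "hd ?Q = a" using less.prems(2) P by (cases xs) auto
    moreover have "last ?Q = b" using less.prems(3) P by (cases zs) auto
    moreover have "length ?Q < length P" using P by simp
    ultimately obtain Q where "simple_path_from_to E a b Q" "set Q \<subseteq> set ?Q"
      using less.hyps by blast
    then show ?thesis using P by auto
  qed
qed

lemma sorted_unique:
  assumes asym: "\<And>x y. R x y \<Longrightarrow> \<not> R y x"
  shows "sorted_wrt R xs \<Longrightarrow> sorted_wrt R ys \<Longrightarrow> set xs = set ys \<Longrightarrow> xs = ys"
proof (induction xs arbitrary: ys)
  case Nil
  then show ?case by simp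
next
  case (Cons x xs)
  then obtain y ys' where ys: "ys = y # ys'" by (cases ys) auto
  have nx: "x \<notin> set xs" using Cons.prems(1) asym by auto
  have ny: "y \<notin> set ys'" using Cons.prems(2) ys asym by auto
  have "x = y"
  proof (rule ccontr)
    assume "x \<noteq> y"
    then have "y \<in> set xs" "x \<in> set ys'" using Cons.prems(3) ys by auto
    then have "R x y" "R y x" using Cons.prems(1,2) ys by auto
    then show False using asym by blast
  qed
  then have "set xs = set ys'" using Cons.prems(3) ys nx ny by auto
  then have "xs = ys'" using Cons.IH Cons.prems ys by auto
  then show ?case using ys \<open>x = y\<close> by simp
qed

lemma set_take_nth:
  assumes "distinct P" "j < length P" "P ! j \<in> set (take k P)"
  shows "j < k"
proof -
  obtain k' where "k' < length (take k P)" "take k P ! k' = P ! j"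
    using assms(3) by (auto simp: in_set_conv_nth)
  then have "k' < k" "k' < length P" "P ! k' = P ! j" by auto
  then have "k' = j" using assms(1,2) nth_eq_iff_index_eq by blast
  then show ?thesis using \<open>k' < k\<close> by simp
qed

lemma set_drop_nth:
  assumes "distinct P" "j < length P" "P ! j \<in> set (drop k P)"
  shows "k \<le> j"
proof -
  obtain k' where "k' < length (drop k P)" "drop k P ! k' = P ! j"
    using assms(3) by (auto simp: in_set_conv_nth)
  then have "k + k' < length P" "P ! (k + k') = P ! j" by auto
  then have "k + k' = j" using assms(1,2) nth_eq_iff_index_eq by blast
  then show ?thesis by simp
qed

lemma consistent:
  assumes sb: "abs_super_simple E n \<iota> out b"
    and m1: "m1 \<in> {1..n}" and P1: "simple_path_from_to E (\<iota> m1) out P1"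
    and P2: "simple_path_from_to E (\<iota> m2) out P2"
    and ij: "i < j" "j < length P1" "P1 ! i = a" "P1 ! j = b"
    and i2: "i2 < length P2" "P2 ! i2 = a" and j2: "j2 < length P2" "P2 ! j2 = b"
  shows "i2 < j2"
proof (rule ccontr)
  assume "\<not> i2 < j2"
  moreover have "i2 \<noteq> j2"
  proof
    assume "i2 = j2"
    then have "a = b" using i2 j2 by simp
    then have "P1 ! i = P1 ! j" using ij by simp
    then show False using P1 ij unfolding simple_path_from_to_def
      using nth_eq_iff_index_eq by fastforce
  qed
  ultimately have lt: "j2 < i2" by simp
  let ?A = "take (Suc i) P1" and ?B = "drop i2 P2"
  have d1: "distinct P1" and d2: "distinct P2" and p1: "is_path E P1" and p2: "is_path E P2"
    using P1 P2 unfolding simple_path_from_to_def by auto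
  have pA: "is_path E ?A" using p1 ij unfolding is_path_def by auto
  have pB: "is_path E ?B" using p2 i2 unfolding is_path_def by auto
  have lA: "last ?A = a" using ij by (simp add: take_Suc_conv_app_nth)
  have hB: "hd ?B = a" using i2 by (simp add: hd_drop_conv_nth)
  have hA: "hd ?A = \<iota> m1" using P1 unfolding simple_path_from_to_def
    by (metis hd_take zero_less_Suc)
  have lB: "last ?B = out" using P2 i2 unfolding simple_path_from_to_def by simp
  note J = join_path[OF pA pB, unfolded lA hB, simplified]
  have bA: "b \<notin> set ?A"
  proof
    assume "b \<in> set ?A"
    then have "j < Suc i" using set_take_nth[OF d1 ij(2)] ij(4) by simp
    then show False using ij(1) by simp
  qed
  have bB: "b \<notin> set ?B"
  proof
    assume "b \<in> set ?B"
    then have "i2 \<le> j2" using set_drop_nth[OF d2 j2(1)] j2(2) by simp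
    then show False using lt by simp
  qed
  obtain Q where Q: "simple_path_from_to E (\<iota> m1) out Q" "set Q \<subseteq> set (?A @ tl ?B)"
    using shorten[of E "?A @ tl ?B" "\<iota> m1" out] J hA lB by auto
  have "b \<in> set Q" using sb m1 Q(1) unfolding abs_super_simple_def by blast
  then show False using Q(2) J bA bB by auto
qed

lemma ssg_D:
  assumes "ss_greater E n \<iota> out a b" "m \<in> {1..n}" "simple_path_from_to E (\<iota> m) out P"
  shows "\<exists>i j. i < j \<and> j < length P \<and> P ! i = a \<and> P ! j = b"
  using assms(1)[unfolded ss_greater_def, rule_format, OF assms(2,3)] .

theorem lemma3p17:
  fixes V :: "'a set" and E :: "('a \<times> 'a) set" and n :: nat and \<iota> :: "nat \<Rightarrow> 'a" and out :: 'a
  assumes "core_network V E n \<iota> out"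
  shows "abs_super_simple E n \<iota> out out \<and>
    (\<exists>!\<rho>. distinct \<rho> \<and> set \<rho> = {v \<in> V. abs_super_simple E n \<iota> out v} - {out} \<and>
          sorted_wrt (ss_greater E n \<iota> out) (\<rho> @ [out]))"
proof -
  let ?R = "ss_greater E n \<iota> out"
  let ?S = "{v \<in> V. abs_super_simple E n \<iota> out v} - {out}"
  have A1: "abs_super_simple E n \<iota> out out"
    unfolding abs_super_simple_def simple_path_from_to_def
    using last_in_set by (fastforce simp: is_path_def)
  have outV: "out \<in> V" and cn: "\<forall>v\<in>V. downstream E v out \<and> (\<exists>m\<in>{1..n}. downstream E (\<iota> m) v)"
    and inV: "\<forall>m\<in>{1..n}. \<iota> m \<in> V"
    using assms unfolding core_network_def network_def by auto
  have "\<exists>m\<in>{1..n}. downstream E (\<iota> m) out" using cn outV by blast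
  then have n1: "1 \<in> {1..n}" by (auto simp del: atLeastAtMost_iff) (simp add: atLeastAtMost_iff)
  have i1: "\<iota> 1 \<in> V" using inV n1 by (rule bspec)
  have "downstream E (\<iota> 1) out" using bspec[OF cn i1] by (rule conjunct1)
  then have "\<exists>W. is_path E W \<and> hd W = \<iota> 1 \<and> last W = out"
    unfolding downstream_def by (rule walk_exists)
  then obtain W where W: "is_path E W \<and> hd W = \<iota> 1 \<and> last W = out" ..
  have "\<exists>Q. simple_path_from_to E (\<iota> 1) out Q \<and> set Q \<subseteq> set W"
    using W by (intro shorten) simp_all
  then obtain P0 where P0': "simple_path_from_to E (\<iota> 1) out P0 \<and> set P0 \<subseteq> set W" ..
  then have P0: "simple_path_from_to E (\<iota> 1) out P0" by (rule conjunct1)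
  have d0: "distinct P0" using P0 unfolding simple_path_from_to_def by simp
  have asym: "\<not> ?R y x" if "?R x y" for x y
  proof
    assume "?R y x"
    then have "\<exists>i j. i < j \<and> j < length P0 \<and> P0 ! i = y \<and> P0 ! j = x"
      using ssg_D[of E n \<iota> out y x 1 P0] n1 P0 by blast
    then obtain i j where I: "i < j" "j < length P0" "P0 ! i = y" "P0 ! j = x" by blast
    have "\<exists>i j. i < j \<and> j < length P0 \<and> P0 ! i = x \<and> P0 ! j = y"
      using ssg_D[of E n \<iota> out x y 1 P0] that n1 P0 by blast
    then obtain i' j' where J: "i' < j'" "j' < length P0" "P0 ! i' = x" "P0 ! j' = y" by blast
    have li: "i < length P0" "i' < length P0" using I J by simp_all
    have "i = j'" using nth_eq_iff_index_eq[OF d0 li(1) J(2)] I(3) J(4) by simp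
    moreover have "j = i'" using nth_eq_iff_index_eq[OF d0 I(2) li(2)] I(4) J(3) by simp
    ultimately show False using I(1) J(1) by simp
  qed
  have inP: "v \<in> set P" if "v \<in> ?S" "m \<in> {1..n}" "simple_path_from_to E (\<iota> m) out P" for v m P
    using that unfolding abs_super_simple_def by blast
  have Rout: "?R x out" if xS: "x \<in> ?S" for x
    unfolding ss_greater_def
  proof (intro ballI allI impI)
    fix m P assume m: "m \<in> {1..n}" and P: "simple_path_from_to E (\<iota> m) out P"
    obtain i where i: "i < length P" "P ! i = x" using inP[OF xS m P] by (metis in_set_conv_nth)
    have ne: "P \<noteq> []" and l: "P ! (length P - 1) = out" using P unfolding simple_path_from_to_def is_path_def
      by (auto simp: last_conv_nth)
    have "i \<noteq> length P - 1" using i l xS by auto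
    then show "\<exists>i j. i < j \<and> j < length P \<and> P ! i = x \<and> P ! j = out"
      using i l ne by (intro exI[of _ i] exI[of _ "length P - 1"]) auto
  qed
  let ?R' = "\<lambda>x y. x \<in> ?S \<longrightarrow> y \<in> ?S \<longrightarrow> ?R x y"
  have "sorted_wrt ?R' P0"
    unfolding sorted_wrt_iff_nth_less
  proof (intro allI impI)
    fix i j assume ij: "i < j" "j < length P0" and a: "P0 ! i \<in> ?S" and b: "P0 ! j \<in> ?S"
    show "?R (P0 ! i) (P0 ! j)"
      unfolding ss_greater_def
    proof (intro ballI allI impI)
      fix m P assume m: "m \<in> {1..n}" and P: "simple_path_from_to E (\<iota> m) out P"
      obtain i2 where i2: "i2 < length P" "P ! i2 = P0 ! i"
        using inP[OF a m P] by (metis in_set_conv_nth)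
      obtain j2 where j2: "j2 < length P" "P ! j2 = P0 ! j"
        using inP[OF b m P] by (metis in_set_conv_nth)
      have "i2 < j2" using consistent[of E n \<iota> out "P0 ! j" 1 P0 m P i j "P0 ! i" i2 j2] b n1 P0 m P ij i2 j2
        by auto
      show "\<exists>i' j'. i' < j' \<and> j' < length P \<and> P ! i' = P0 ! i \<and> P ! j' = P0 ! j"
        using \<open>i2 < j2\<close> i2 j2 by blast
    qed
  qed
  then have "sorted_wrt ?R' (filter (\<lambda>v. v \<in> ?S) P0)" by (rule sorted_wrt_filter)
  then have sf: "sorted_wrt ?R (filter (\<lambda>v. v \<in> ?S) P0)"
    by (rule sorted_wrt_mono_rel[rotated]) auto
  have setf: "set (filter (\<lambda>v. v \<in> ?S) P0) = ?S" using inP[OF _ n1 P0] by auto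
  have ex: "distinct (filter (\<lambda>v. v \<in> ?S) P0) \<and> set (filter (\<lambda>v. v \<in> ?S) P0) = ?S \<and>
      sorted_wrt ?R (filter (\<lambda>v. v \<in> ?S) P0 @ [out])"
    using d0 setf sf Rout by (auto simp: sorted_wrt_append)
  show ?thesis
  proof (rule conjI[OF A1], rule ex1I[of _ "filter (\<lambda>v. v \<in> ?S) P0"])
    show "distinct (filter (\<lambda>v. v \<in> ?S) P0) \<and> set (filter (\<lambda>v. v \<in> ?S) P0) = ?S \<and>
      sorted_wrt ?R (filter (\<lambda>v. v \<in> ?S) P0 @ [out])" by (rule ex)
  next
    fix \<rho> assume r: "distinct \<rho> \<and> set \<rho> = ?S \<and> sorted_wrt ?R (\<rho> @ [out])"
    have "\<rho> @ [out] = filter (\<lambda>v. v \<in> ?S) P0 @ [out]"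
      apply (rule sorted_unique[of ?R, OF asym])
      using r ex by auto
    then show "\<rho> = filter (\<lambda>v. v \<in> ?S) P0" by simp
  qed
qed

end
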